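(* Let $X\subseteq\mathbb{R}^k$ be a set of feasible alternatives, $\mathbf{f}=(f_1,f_2):X\to\mathbb{R}^2$ a vector criterion and $Y=\mathbf{f}(X)$. Consider three decision makers $DM_1,DM_2,DM_3$ whose preference relations $\succ_1,\succ_2,\succ_3$ on $\mathbb{R}^2$ are cone relations with cones $K_1,K_2,K_3$, each $K_l$ being a convex pointed cone with $\mathbb{R}^2_+\subseteq K_l$ and $\mathbf{0}_2\notin K_l$. Suppose that vectors $$\mathbf{y}^{(l)}=\begin{pmatrix} w_1^{(l)}\\ -w_2^{(l)}\end{pmatrix},\qquad w_1^{(l)}>0,\ w_2^{(l)}>0,\qquad l=1,2,3,$$ are given with $\mathbf{y}^{(1)}\succ_1\mathbf{0}_2$, $\mathbf{y}^{(2)}\succ_2\mathbf{0}_2$, $\mathbf{y}^{(3)}\succ_3\mathbf{0}_2$, and that no two of these vectors are codirectional. Put $W(l,s)=w_1^{(l)}w_2^{(s)}-w_2^{(l)}w_1^{(s)}$. Then there is exactly one index $s\in\{1,2,3\}$ such that $W(l,s)>0$ and $W(s,k)>0$ for some indices $l,k\in\{1,2,3\}$ with $l\neq k$, $l\neq s$, $k\neq s$; and for this $s$, defining the vector criterion $\mathbf{g}=(g_1,g_2)$ on $X$ by $g_1=f_1$, $g_2=w_2^{(s)}f_1+w_1^{(s)}f_2$, we have $\hat P_{\mathbf{g}}(Y)\subseteq P(Y)$, where $\hat P_{\mathbf{g}}(Y)=\mathbf{f}(P_{\mathbf{g}}(X))$.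
   Context: For $\mathbf{a},\mathbf{b}\in\mathbb{R}^m$, $\mathbf{a}\geq\mathbf{b}$ means $a_i\ge b_i$ for all $i$ and $\mathbf{a}\neq\mathbf{b}$ (Pareto relation); $\mathbb{R}^m_+=\{\mathbf{y}\in\mathbb{R}^m:\mathbf{y}\geq\mathbf{0}_m\}$ (nonnegative orthant without the origin). A binary relation $\mathfrak{R}$ on $\mathbb{R}^m$ is a cone relation with cone $K$ if $\mathbf{y}^{(1)}\mathfrak{R}\,\mathbf{y}^{(2)}\iff \mathbf{y}^{(1)}-\mathbf{y}^{(2)}\in K$ for all $\mathbf{y}^{(1)},\mathbf{y}^{(2)}\in\mathbb{R}^m$. The Pareto set is $P(Y)=\{\mathbf{y}^*\in Y:\ \nexists\,\mathbf{y}\in Y,\ \mathbf{y}\geq\mathbf{y}^*\}$, and for a vector criterion $\mathbf{g}$ on $X$, $P_{\mathbf{g}}(X)=\{\mathbf{x}^*\in X:\ \nexists\,\mathbf{x}\in X,\ \mathbf{g}(\mathbf{x})\geq\mathbf{g}(\mathbf{x}^* )\}$. Two vectors are codirectional if one is a positive multiple of the other. *)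

theory Defs
  imports "HOL-Analysis.Analysis"
begin

definition pareto_ge :: "real \<times> real \<Rightarrow> real \<times> real \<Rightarrow> bool" where
  "pareto_ge a b \<longleftrightarrow> fst a \<ge> fst b \<and> snd a \<ge> snd b \<and> a \<noteq> b"

definition nonneg_orthant :: "(real \<times> real) set" where
  "nonneg_orthant = {y. pareto_ge y 0}"

definition is_cone_relation :: "(real \<times> real \<Rightarrow> real \<times> real \<Rightarrow> bool) \<Rightarrow> (real \<times> real) set \<Rightarrow> bool" where
  "is_cone_relation R K \<longleftrightarrow> (\<forall>y1 y2. R y1 y2 \<longleftrightarrow> y1 - y2 \<in> K)"

text \<open>Cone in the sense of the paper: closed under multiplication by positive scalars
  (the origin is excluded separately by hypothesis).\<close>
definition pos_cone :: "(real \<times> real) set \<Rightarrow> bool" where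
  "pos_cone K \<longleftrightarrow> (\<forall>y\<in>K. \<forall>c::real. c > 0 \<longrightarrow> c *\<^sub>R y \<in> K)"

definition pointed :: "(real \<times> real) set \<Rightarrow> bool" where
  "pointed K \<longleftrightarrow> (\<forall>y\<in>K. - y \<notin> K)"

definition codirectional :: "real \<times> real \<Rightarrow> real \<times> real \<Rightarrow> bool" where
  "codirectional a b \<longleftrightarrow> (\<exists>c::real. c > 0 \<and> a = c *\<^sub>R b)"

definition pareto_set :: "(real \<times> real) set \<Rightarrow> (real \<times> real) set" where
  "pareto_set Y = {y \<in> Y. \<not> (\<exists>y'\<in>Y. pareto_ge y' y)}"

definition pareto_set_crit :: "('a \<Rightarrow> real \<times> real) \<Rightarrow> 'a set \<Rightarrow> 'a set" where
  "pareto_set_crit g X = {x \<in> X. \<not> (\<exists>x'\<in>X. pareto_ge (g x') (g x))}"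

end

theory Submission
  imports Defs
begin

lemma u: "(\<exists>!s. s \<in> {1::nat,2,3} \<and> P s) =
     ((P 1 \<and> \<not> P 2 \<and> \<not> P 3) \<or> (\<not> P 1 \<and> P 2 \<and> \<not> P 3) \<or> (\<not> P 1 \<and> \<not> P 2 \<and> P 3))"
proof
  assume "\<exists>!s. s \<in> {1::nat,2,3} \<and> P s"
  then obtain s where s: "s \<in> {1::nat,2,3}" "P s" and un: "\<And>t. t \<in> {1::nat,2,3} \<Longrightarrow> P t \<Longrightarrow> t = s"
    by blast
  have "s = 1 \<or> s = 2 \<or> s = 3" using s by auto
  then show "(P 1 \<and> \<not> P 2 \<and> \<not> P 3) \<or> (\<not> P 1 \<and> P 2 \<and> \<not> P 3) \<or> (\<not> P 1 \<and> \<not> P 2 \<and> P 3)"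
  proof (elim disjE)
    assume "s = 1" then show ?thesis using s un[of 2] un[of 3] by auto
  next
    assume "s = 2" then show ?thesis using s un[of 1] un[of 3] by auto
  next
    assume "s = 3" then show ?thesis using s un[of 2] un[of 1] by auto
  qed
next
  assume "(P 1 \<and> \<not> P 2 \<and> \<not> P 3) \<or> (\<not> P 1 \<and> P 2 \<and> \<not> P 3) \<or> (\<not> P 1 \<and> \<not> P 2 \<and> P 3)"
  then show "\<exists>!s. s \<in> {1::nat,2,3} \<and> P s"
  proof (elim disjE)
    assume "P 1 \<and> \<not> P 2 \<and> \<not> P 3" then show ?thesis by (intro ex1I[of _ 1]) auto
  next
    assume "\<not> P 1 \<and> P 2 \<and> \<not> P 3" then show ?thesis by (intro ex1I[of _ 2]) auto
  next
    assume "\<not> P 1 \<and> \<not> P 2 \<and> P 3" then show ?thesis by (intro ex1I[of _ 3]) auto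
  qed
qed

lemma mid3:
  fixes r :: "nat \<Rightarrow> real"
  assumes "r 1 \<noteq> r 2" "r 1 \<noteq> r 3" "r 2 \<noteq> r 3"
  shows "\<exists>!s. s \<in> {1,2,3} \<and> (\<exists>l k. l \<in> {1,2,3} \<and> k \<in> {1,2,3} \<and> r l < r s \<and> r s < r k)"
proof -
  have ex: "\<And>P. (\<exists>l k. l \<in> {1::nat,2,3} \<and> k \<in> {1,2,3} \<and> P l k) =
     (P 1 1 \<or> P 1 2 \<or> P 1 3 \<or> P 2 1 \<or> P 2 2 \<or> P 2 3 \<or> P 3 1 \<or> P 3 2 \<or> P 3 3)"
    by auto
  have "(r 1 < r 2 \<and> r 2 < r 3) \<or> (r 1 < r 3 \<and> r 3 < r 2) \<or> (r 2 < r 1 \<and> r 1 < r 3) \<or> (r 2 < r 3 \<and> r 3 < r 1) \<or> (r 3 < r 1 \<and> r 1 < r 2) \<or> (r 3 < r 2 \<and> r 2 < r 1)" using assms by linarith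
  then show ?thesis
  proof (elim disjE conjE)
    assume h: "r 1 < r 2" "r 2 < r 3"
    then have "r 1 < r 3" "\<not> r 2 < r 1" "\<not> r 3 < r 2" "\<not> r 3 < r 1" by auto
    with h show ?thesis by (intro u[THEN iffD2], unfold ex) simp
  next
    assume h: "r 1 < r 3" "r 3 < r 2"
    then have "r 1 < r 2" "\<not> r 3 < r 1" "\<not> r 2 < r 3" "\<not> r 2 < r 1" by auto
    with h show ?thesis by (intro u[THEN iffD2], unfold ex) simp
  next
    assume h: "r 2 < r 1" "r 1 < r 3"
    then have "r 2 < r 3" "\<not> r 1 < r 2" "\<not> r 3 < r 1" "\<not> r 3 < r 2" by auto
    with h show ?thesis by (intro u[THEN iffD2], unfold ex) simp
  next
    assume h: "r 2 < r 3" "r 3 < r 1"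
    then have "r 2 < r 1" "\<not> r 3 < r 2" "\<not> r 1 < r 3" "\<not> r 1 < r 2" by auto
    with h show ?thesis by (intro u[THEN iffD2], unfold ex) simp
  next
    assume h: "r 3 < r 1" "r 1 < r 2"
    then have "r 3 < r 2" "\<not> r 1 < r 3" "\<not> r 2 < r 1" "\<not> r 2 < r 3" by auto
    with h show ?thesis by (intro u[THEN iffD2], unfold ex) simp
  next
    assume h: "r 3 < r 2" "r 2 < r 1"
    then have "r 3 < r 1" "\<not> r 2 < r 3" "\<not> r 1 < r 2" "\<not> r 1 < r 3" by auto
    with h show ?thesis by (intro u[THEN iffD2], unfold ex) simp
  qed
qed

theorem theorem1:
  fixes X :: "(real ^ 'k) set"
    and f :: "real ^ 'k \<Rightarrow> real \<times> real"
    and R :: "nat \<Rightarrow> (real \<times> real \<Rightarrow> real \<times> real \<Rightarrow> bool)"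
    and K :: "nat \<Rightarrow> (real \<times> real) set"
    and w1 w2 :: "nat \<Rightarrow> real"
  assumes cone_rel: "\<And>l. l \<in> {1,2,3} \<Longrightarrow> is_cone_relation (R l) (K l)"
    and K_convex: "\<And>l. l \<in> {1,2,3} \<Longrightarrow> convex (K l)"
    and K_cone: "\<And>l. l \<in> {1,2,3} \<Longrightarrow> pos_cone (K l)"
    and K_pointed: "\<And>l. l \<in> {1,2,3} \<Longrightarrow> pointed (K l)"
    and K_orthant: "\<And>l. l \<in> {1,2,3} \<Longrightarrow> nonneg_orthant \<subseteq> K l"
    and K_zero: "\<And>l. l \<in> {1,2,3} \<Longrightarrow> (0::real \<times> real) \<notin> K l"
    and w_pos: "\<And>l. l \<in> {1,2,3} \<Longrightarrow> w1 l > 0 \<and> w2 l > 0"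
    and y_pref: "\<And>l. l \<in> {1,2,3} \<Longrightarrow> R l (w1 l, - w2 l) 0"
    and noncodir: "\<And>l s. l \<in> {1,2,3} \<Longrightarrow> s \<in> {1,2,3} \<Longrightarrow> l \<noteq> s \<Longrightarrow>
                     \<not> codirectional (w1 l, - w2 l) (w1 s, - w2 s)"
  shows "let W = (\<lambda>l s. w1 l * w2 s - w2 l * w1 s);
             Q = (\<lambda>s. s \<in> {1,2,3} \<and> (\<exists>l k. l \<in> {1,2,3} \<and> k \<in> {1,2,3} \<and>
                    l \<noteq> k \<and> l \<noteq> s \<and> k \<noteq> s \<and> W l s > 0 \<and> W s k > 0))
         in (\<exists>!s. Q s) \<and>
            (\<forall>s. Q s \<longrightarrow>
               (let g = (\<lambda>x. (fst (f x), w2 s * fst (f x) + w1 s * snd (f x)))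
                in f ` pareto_set_crit g X \<subseteq> pareto_set (f ` X)))"
proof -
  define r where "r l = w2 l / w1 l" for l
  define W where "W = (\<lambda>l s. w1 l * w2 s - w2 l * w1 s)"
  define Q where "Q = (\<lambda>s. s \<in> {1::nat,2,3} \<and> (\<exists>l k. l \<in> {1,2,3} \<and> k \<in> {1,2,3} \<and>
                    l \<noteq> k \<and> l \<noteq> s \<and> k \<noteq> s \<and> W l s > 0 \<and> W s k > 0))"
  have Wr: "(W l s > 0) = (r l < r s)" if "l \<in> {1,2,3}" "s \<in> {1,2,3}" for l s
  proof -
    from w_pos[OF that(1)] w_pos[OF that(2)]
    have "w1 l > 0" "w1 s > 0" by auto
    then show ?thesis unfolding W_def r_def
      by (simp add: divide_less_eq less_divide_eq field_simps)
  qed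
  have rne: "r l \<noteq> r s" if "l \<in> {1,2,3}" "s \<in> {1,2,3}" "l \<noteq> s" for l s
  proof
    assume eq: "r l = r s"
    from w_pos[OF that(1)] w_pos[OF that(2)]
    have p: "w1 l > 0" "w1 s > 0" by auto
    have "w2 l = (w1 l / w1 s) * w2 s" using eq p unfolding r_def by (simp add: field_simps)
    then have "(w1 l, - w2 l) = (w1 l / w1 s) *\<^sub>R (w1 s, - w2 s)" using p by simp
    then have "codirectional (w1 l, - w2 l) (w1 s, - w2 s)"
      unfolding codirectional_def using p by (intro exI[of _ "w1 l / w1 s"]) auto
    with noncodir[OF that] show False by simp
  qed
  have QQ: "Q s = (s \<in> {1,2,3} \<and> (\<exists>l k. l \<in> {1,2,3} \<and> k \<in> {1,2,3} \<and> r l < r s \<and> r s < r k))" for s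
    unfolding Q_def
    by (smt (verit, best) Wr)
  have part1: "\<exists>!s. Q s"
    unfolding QQ by (rule mid3) (use rne[of 1 2] rne[of 1 3] rne[of 2 3] in auto)
  have part2: "f ` pareto_set_crit (\<lambda>x. (fst (f x), w2 s * fst (f x) + w1 s * snd (f x))) X
      \<subseteq> pareto_set (f ` X)" if "Q s" for s
  proof
    fix y assume "y \<in> f ` pareto_set_crit (\<lambda>x. (fst (f x), w2 s * fst (f x) + w1 s * snd (f x))) X"
    then obtain x where y: "y = f x" and xX: "x \<in> X"
      and nx: "\<not> (\<exists>x'\<in>X. pareto_ge (fst (f x'), w2 s * fst (f x') + w1 s * snd (f x'))
                                     (fst (f x), w2 s * fst (f x) + w1 s * snd (f x)))"
      unfolding pareto_set_crit_def by auto
    have sp: "w1 s > 0" "w2 s > 0" using that w_pos unfolding Q_def by auto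
    show "y \<in> pareto_set (f ` X)"
    proof (rule ccontr)
      assume "y \<notin> pareto_set (f ` X)"
      then obtain x' where x'X: "x' \<in> X" and pg: "pareto_ge (f x') (f x)"
        using xX y unfolding pareto_set_def by auto
      obtain a b where ab: "f x' = (a, b)" by fastforce
      obtain c d where cd: "f x = (c, d)" by fastforce
      have h: "a \<ge> c" "b \<ge> d" "a \<noteq> c \<or> b \<noteq> d" using pg ab cd unfolding pareto_ge_def by auto
      have "w2 s * c \<le> w2 s * a" using h sp by (simp add: mult_left_mono)
      moreover have "w1 s * d \<le> w1 s * b" using h sp by (simp add: mult_left_mono)
      moreover have "a = c \<Longrightarrow> w1 s * d < w1 s * b" using h sp by auto
      ultimately have "pareto_ge (a, w2 s * a + w1 s * b) (c, w2 s * c + w1 s * d)"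
        unfolding pareto_ge_def using h by auto
      with nx x'X ab cd show False by auto
    qed
  qed
  have "(\<exists>!s. Q s) \<and> (\<forall>s. Q s \<longrightarrow> f ` pareto_set_crit (\<lambda>x. (fst (f x), w2 s * fst (f x) + w1 s * snd (f x))) X
      \<subseteq> pareto_set (f ` X))" using part1 part2 by blast
  then show ?thesis unfolding Let_def Q_def W_def .
qed

end
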